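(* For all integers $m,n\geq 3$, let $T_{m,n}=C_m\Box C_n$. Then $\chi_i(T_{m,n})=5$ if $m\equiv 0 \pmod 5$ and $n\equiv 0 \pmod 5$, and $\chi_i(T_{m,n})=6$ otherwise.
   Context: For a graph $G$, an incidence is a pair $(v,e)$ with $v\in V(G)$, $e\in E(G)$ and $v$ incident with $e$. Two incidences $(v,e)$ and $(w,f)$ are adjacent if $v=w$, or $e=f$, or the edge $vw$ equals $e$ or $f$. An incidence $k$-coloring of $G$ is a map from the set of incidences of $G$ to a set of $k$ colors such that adjacent incidences receive distinct colors; the incidence chromatic number $\chi_i(G)$ is the least such $k$. $C_n$ denotes the cycle on $n$ vertices and $\Box$ the Cartesian product of graphs: $G\Box H$ has vertex set $V(G)\times V(H)$, with $(u_1,v_1)$ adjacent to $(u_2,v_2)$ iff either $u_1=u_2$ and $v_1v_2\in E(H)$, or $v_1=v_2$ and $u_1u_2\in E(G)$. *)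

theory Defs
  imports Main
begin

text \<open>Simple graphs are given by a vertex set V and an edge set E of 2-element subsets of V.
  Incidences only depend on E.\<close>

definition incidences :: "'a set set \<Rightarrow> ('a \<times> 'a set) set" where
  "incidences E = {(v, e). e \<in> E \<and> v \<in> e}"

definition inc_adj :: "('a \<times> 'a set) \<Rightarrow> ('a \<times> 'a set) \<Rightarrow> bool" where
  "inc_adj a b \<longleftrightarrow> fst a = fst b \<or> snd a = snd b \<or> {fst a, fst b} = snd a \<or> {fst a, fst b} = snd b"

definition incidence_coloring :: "'a set set \<Rightarrow> nat \<Rightarrow> (('a \<times> 'a set) \<Rightarrow> nat) \<Rightarrow> bool" where
  "incidence_coloring E k c \<longleftrightarrow>
     (\<forall>a \<in> incidences E. c a < k) \<and>
     (\<forall>a \<in> incidences E. \<forall>b \<in> incidences E. a \<noteq> b \<and> inc_adj a b \<longrightarrow> c a \<noteq> c b)"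

definition incidence_chromatic_number :: "'a set set \<Rightarrow> nat" where
  "incidence_chromatic_number E = (LEAST k. \<exists>c. incidence_coloring E k c)"

definition cycle_verts :: "nat \<Rightarrow> nat set" where
  "cycle_verts m = {0..<m}"

definition cycle_edges :: "nat \<Rightarrow> nat set set" where
  "cycle_edges m = {{i, (i + 1) mod m} | i. i < m}"

definition cart_edges :: "'a set \<Rightarrow> 'a set set \<Rightarrow> 'b set \<Rightarrow> 'b set set \<Rightarrow> ('a \<times> 'b) set set" where
  "cart_edges V1 E1 V2 E2 =
     {{(u1, v), (u2, v)} | u1 u2 v. {u1, u2} \<in> E1 \<and> v \<in> V2} \<union>
     {{(u, v1), (u, v2)} | u v1 v2. u \<in> V1 \<and> {v1, v2} \<in> E2}"

definition torus_edges :: "nat \<Rightarrow> nat \<Rightarrow> (nat \<times> nat) set set" where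
  "torus_edges m n = cart_edges (cycle_verts m) (cycle_edges m) (cycle_verts n) (cycle_edges n)"

end

theory Submission
  imports Defs
begin


definition nxt :: "nat \<Rightarrow> nat \<Rightarrow> nat" where "nxt m i = (i+1) mod m"
definition prv :: "nat \<Rightarrow> nat \<Rightarrow> nat" where "prv m i = (i+m-1) mod m"

lemma nxt_eq: "i < m \<Longrightarrow> nxt m i = (if i+1 = m then 0 else i+1)"
  unfolding nxt_def by auto
lemma prv_eq: "i < m \<Longrightarrow> prv m i = (if i = 0 then m-1 else i-1)"
proof -
  assume im: "i < m"
  show ?thesis
  proof (cases "i = 0")
    case True then show ?thesis using im by (simp add: prv_def)
  next
    case False
    then have e: "i + m - 1 = (i - 1) + m" by simp
    have "prv m i = ((i - 1) + m) mod m" unfolding prv_def by (simp only: e)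
    also have "\<dots> = i - 1" using im by simp
    finally show ?thesis using False by simp
  qed
qed

definition nb :: "nat \<Rightarrow> nat \<Rightarrow> nat \<Rightarrow> nat \<times> nat \<Rightarrow> nat \<times> nat" where
  "nb m n d v = (if d = 0 then (nxt m (fst v), snd v) else if d = 1 then (prv m (fst v), snd v)
     else if d = 2 then (fst v, nxt n (snd v)) else (fst v, prv n (snd v)))"

definition opp :: "nat \<Rightarrow> nat" where
  "opp d = (if d = 0 then 1 else if d = 1 then 0 else if d = 2 then 3 else 2)"

definition inr :: "nat \<Rightarrow> nat \<Rightarrow> nat \<times> nat \<Rightarrow> bool" where
  "inr m n v \<longleftrightarrow> fst v < m \<and> snd v < n"

lemma opp_lt: "d < 4 \<Longrightarrow> opp d < 4" unfolding opp_def by auto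
lemma opp_opp: "d < 4 \<Longrightarrow> opp (opp d) = d" unfolding opp_def by auto

lemma nb_inr: "m > 0 \<Longrightarrow> n > 0 \<Longrightarrow> inr m n v \<Longrightarrow> inr m n (nb m n d v)"
  unfolding inr_def nb_def nxt_def prv_def by auto

lemma nb_opp: "inr m n v \<Longrightarrow> d < 4 \<Longrightarrow> nb m n (opp d) (nb m n d v) = v"
  unfolding inr_def nb_def opp_def
  by (cases v) (auto simp: nxt_eq prv_eq)

lemma nb_ne: "m \<ge> 3 \<Longrightarrow> n \<ge> 3 \<Longrightarrow> inr m n v \<Longrightarrow> nb m n d v \<noteq> v"
  unfolding inr_def nb_def
  by (cases v) (auto simp: nxt_eq prv_eq split: if_splits)

lemma nb_inj: "m \<ge> 3 \<Longrightarrow> n \<ge> 3 \<Longrightarrow> inr m n v \<Longrightarrow> d < 4 \<Longrightarrow> d' < 4 \<Longrightarrow> nb m n d v = nb m n d' v \<Longrightarrow> d = d'"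
  unfolding inr_def nb_def
  by (cases v) (auto simp: nxt_eq prv_eq split: if_splits)


lemma cycle_edges_alt: "cycle_edges m = {{i, nxt m i} | i. i < m}"
  unfolding cycle_edges_def nxt_def by simp

lemma dbl_pair: "{u1, u2} = {a, b} \<Longrightarrow> {(u1, v), (u2, v)} = {(a, v), (b, v)}"
  by (auto simp: doubleton_eq_iff)
lemma dbl_pair2: "{u1, u2} = {a, b} \<Longrightarrow> {(v, u1), (v, u2)} = {(v, a), (v, b)}"
  by (auto simp: doubleton_eq_iff)

lemma torus_edges_alt:
  "torus_edges m n = {{v, nb m n 0 v} | v. inr m n v} \<union> {{v, nb m n 2 v} | v. inr m n v}"
proof -
  have A: "{{(u1, v), (u2, v)} | u1 u2 v. {u1, u2} \<in> cycle_edges m \<and> v \<in> cycle_verts n}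
       = {{v, nb m n 0 v} | v. inr m n v}"
  proof (intro set_eqI iffI)
    fix e assume "e \<in> {{(u1, v), (u2, v)} | u1 u2 v. {u1, u2} \<in> cycle_edges m \<and> v \<in> cycle_verts n}"
    then obtain u1 u2 v i where "e = {(u1, v), (u2, v)}" "{u1,u2} = {i, nxt m i}" "i < m" "v < n"
      unfolding cycle_edges_alt cycle_verts_def by auto
    then have "e = {(i,v), nb m n 0 (i,v)}" "inr m n (i,v)"
      using dbl_pair by (auto simp: nb_def inr_def)
    then show "e \<in> {{v, nb m n 0 v} | v. inr m n v}" by blast
  next
    fix e assume "e \<in> {{v, nb m n 0 v} | v. inr m n v}"
    then obtain i j where ij: "e = {(i,j), (nxt m i, j)}" "i < m" "j < n"
      by (auto simp: nb_def inr_def)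
    have "{i, nxt m i} \<in> cycle_edges m" using ij unfolding cycle_edges_alt by blast
    moreover have "j \<in> cycle_verts n" using ij by (simp add: cycle_verts_def)
    ultimately show "e \<in> {{(u1, v), (u2, v)} | u1 u2 v. {u1, u2} \<in> cycle_edges m \<and> v \<in> cycle_verts n}"
      unfolding mem_Collect_eq using ij(1) by (intro exI[of _ i] exI[of _ "nxt m i"] exI[of _ j]) simp
  qed
  have B: "{{(u, v1), (u, v2)} | u v1 v2. u \<in> cycle_verts m \<and> {v1, v2} \<in> cycle_edges n}
       = {{v, nb m n 2 v} | v. inr m n v}"
  proof (intro set_eqI iffI)
    fix e assume "e \<in> {{(u, v1), (u, v2)} | u v1 v2. u \<in> cycle_verts m \<and> {v1, v2} \<in> cycle_edges n}"
    then obtain u1 u2 v i where "e = {(v, u1), (v, u2)}" "{u1,u2} = {i, nxt n i}" "i < n" "v < m"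
      unfolding cycle_edges_alt cycle_verts_def by auto
    then have "e = {(v,i), nb m n 2 (v,i)}" "inr m n (v,i)"
      using dbl_pair2 by (auto simp: nb_def inr_def)
    then show "e \<in> {{v, nb m n 2 v} | v. inr m n v}" by blast
  next
    fix e assume "e \<in> {{v, nb m n 2 v} | v. inr m n v}"
    then obtain i j where ij: "e = {(i,j), (i, nxt n j)}" "i < m" "j < n"
      by (auto simp: nb_def inr_def)
    have "{j, nxt n j} \<in> cycle_edges n" using ij unfolding cycle_edges_alt by blast
    moreover have "i \<in> cycle_verts m" using ij by (simp add: cycle_verts_def)
    ultimately show "e \<in> {{(u, v1), (u, v2)} | u v1 v2. u \<in> cycle_verts m \<and> {v1, v2} \<in> cycle_edges n}"
      unfolding mem_Collect_eq using ij(1) by (intro exI[of _ i] exI[of _ j] exI[of _ "nxt n j"]) simp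
  qed
  show ?thesis unfolding torus_edges_def cart_edges_def A B ..
qed

lemma torus_inc:
  assumes "m \<ge> 3" "n \<ge> 3"
  shows "incidences (torus_edges m n) = {(v, {v, nb m n d v}) | v d. inr m n v \<and> d < 4}"
proof (intro set_eqI iffI)
  fix x assume "x \<in> incidences (torus_edges m n)"
  then obtain w e where x: "x = (w, e)" "e \<in> torus_edges m n" "w \<in> e"
    unfolding incidences_def by auto
  then obtain v d where vd: "inr m n v" "e = {v, nb m n d v}" "d = 0 \<or> d = 2"
    unfolding torus_edges_alt by blast
  then have d4: "d < 4" by auto
  show "x \<in> {(v, {v, nb m n d v}) | v d. inr m n v \<and> d < 4}"
  proof (cases "w = v")
    case True then show ?thesis using x vd d4 by blast
  next
    case False
    then have w: "w = nb m n d v" using x vd by auto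
    have "inr m n w" using w vd nb_inr assms by auto
    moreover have "e = {w, nb m n (opp d) w}" using w vd nb_opp[OF vd(1) d4] by auto
    moreover have "opp d < 4" using opp_lt d4 by auto
    ultimately show ?thesis using x by blast
  qed
next
  fix x assume "x \<in> {(v, {v, nb m n d v}) | v d. inr m n v \<and> d < 4}"
  then obtain v d where x: "x = (v, {v, nb m n d v})" "inr m n v" "d < 4" by blast
  have m0: "m > 0" "n > 0" using assms by auto
  have "{v, nb m n d v} \<in> torus_edges m n"
  proof -
    consider "d = 0" | "d = 2" | "d = 1" | "d = 3" using x(3) by linarith
    then show ?thesis
    proof cases
      case 1 then show ?thesis unfolding torus_edges_alt using x by blast
    next
      case 2 then show ?thesis unfolding torus_edges_alt using x by blast
    next
      case 3
      let ?w = "nb m n 1 v"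
      have "inr m n ?w" using nb_inr m0 x by auto
      moreover have "nb m n 0 ?w = v" using nb_opp[OF x(2), of 1] by (simp add: opp_def)
      ultimately have "{?w, nb m n 0 ?w} \<in> torus_edges m n" unfolding torus_edges_alt by blast
      then show ?thesis using 3 \<open>nb m n 0 ?w = v\<close> by (simp add: insert_commute)
    next
      case 4
      let ?w = "nb m n 3 v"
      have "inr m n ?w" using nb_inr m0 x by auto
      moreover have "nb m n 2 ?w = v" using nb_opp[OF x(2), of 3] by (simp add: opp_def)
      ultimately have "{?w, nb m n 2 ?w} \<in> torus_edges m n" unfolding torus_edges_alt by blast
      then show ?thesis using 4 \<open>nb m n 2 ?w = v\<close> by (simp add: insert_commute)
    qed
  qed
  then show "x \<in> incidences (torus_edges m n)" unfolding incidences_def using x by auto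
qed


definition dirof :: "nat \<Rightarrow> nat \<Rightarrow> nat \<times> nat \<Rightarrow> (nat \<times> nat) set \<Rightarrow> nat" where
  "dirof m n v e = (if e = {v, nb m n 0 v} then 0 else if e = {v, nb m n 1 v} then 1
     else if e = {v, nb m n 2 v} then 2 else 3)"

lemma pair_eq_same: "a \<noteq> v \<Longrightarrow> b \<noteq> v \<Longrightarrow> {v, a} = {v, b} \<Longrightarrow> a = b"
  by (auto simp: doubleton_eq_iff)

lemma edge_eq_iff:
  assumes "m \<ge> 3" "n \<ge> 3" "inr m n v" "d < 4" "d' < 4"
  shows "{v, nb m n d v} = {v, nb m n d' v} \<longleftrightarrow> d = d'"
  using pair_eq_same[OF nb_ne[OF assms(1-3)] nb_ne[OF assms(1-3)]] nb_inj[OF assms] by blast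

lemma dirof_nb:
  assumes "m \<ge> 3" "n \<ge> 3" "inr m n v" "d < 4"
  shows "dirof m n v {v, nb m n d v} = d"
proof -
  have E: "\<And>d'. d' < 4 \<Longrightarrow> ({v, nb m n d v} = {v, nb m n d' v}) = (d' = d)"
    using edge_eq_iff[OF assms(1-3) assms(4)] by auto
  consider "d = 0" | "d = 1" | "d = 2" | "d = 3" using assms(4) by linarith
  then show ?thesis
  proof cases
    case 1 then show ?thesis by (simp add: dirof_def)
  next
    case 2 then show ?thesis using E[of 0] by (simp add: dirof_def)
  next
    case 3 then show ?thesis using E[of 0] E[of 1] by (simp add: dirof_def)
  next
    case 4 then show ?thesis using E[of 0] E[of 1] E[of 2] by (simp add: dirof_def)
  qed
qed

definition colr :: "nat \<Rightarrow> nat \<Rightarrow> (nat \<times> nat \<Rightarrow> nat \<Rightarrow> nat) \<Rightarrow> (nat \<times> nat) \<times> (nat \<times> nat) set \<Rightarrow> nat" where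
  "colr m n out a = out (fst a) (dirof m n (fst a) (snd a))"

definition COND :: "nat \<Rightarrow> nat \<Rightarrow> nat \<Rightarrow> (nat \<times> nat \<Rightarrow> nat \<Rightarrow> nat) \<Rightarrow> bool" where
  "COND m n K out \<longleftrightarrow> (\<forall>v. inr m n v \<longrightarrow>
     (\<forall>d<4. out v d < K) \<and> (\<forall>d<4. \<forall>d'<4. d \<noteq> d' \<longrightarrow> out v d \<noteq> out v d') \<and>
     (\<forall>d<4. \<forall>d'<4. out (nb m n d v) (opp d) \<noteq> out v d'))"

lemma upper:
  assumes mn: "m \<ge> 3" "n \<ge> 3" and C: "COND m n K out"
  shows "incidence_coloring (torus_edges m n) K (colr m n out)"
proof -
  have m0: "m > 0" "n > 0" using mn by auto
  have col: "colr m n out (v, {v, nb m n d v}) = out v d" if "inr m n v" "d < 4" for v d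
    unfolding colr_def using dirof_nb[OF mn that] by simp
  show ?thesis unfolding incidence_coloring_def torus_inc[OF mn]
  proof (intro conjI ballI impI)
    fix a assume "a \<in> {(v, {v, nb m n d v}) | v d. inr m n v \<and> d < 4}"
    then obtain v d where "a = (v, {v, nb m n d v})" "inr m n v" "d < 4" by blast
    then have "colr m n out a = out v d" using col by simp
    moreover have "out v d < K" using C \<open>inr m n v\<close> \<open>d < 4\<close> unfolding COND_def by blast
    ultimately show "colr m n out a < K" by simp
  next
    fix a b assume a: "a \<in> {(v, {v, nb m n d v}) | v d. inr m n v \<and> d < 4}"
      and b: "b \<in> {(v, {v, nb m n d v}) | v d. inr m n v \<and> d < 4}"
      and ab: "a \<noteq> b \<and> inc_adj a b"
    from a obtain v d where av: "a = (v, {v, nb m n d v})" "inr m n v" "d < 4" by blast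
    from b obtain w d' where bw: "b = (w, {w, nb m n d' w})" "inr m n w" "d' < 4" by blast
    have ca: "colr m n out a = out v d" using col av by simp
    have cb: "colr m n out b = out w d'" using col bw by simp
    have Cv: "\<And>e e'. e < 4 \<Longrightarrow> e' < 4 \<Longrightarrow> out (nb m n e v) (opp e) \<noteq> out v e'"
      using C av(2) unfolding COND_def by blast
    have Cw: "\<And>e e'. e < 4 \<Longrightarrow> e' < 4 \<Longrightarrow> out (nb m n e w) (opp e) \<noteq> out w e'"
      using C bw(2) unfolding COND_def by blast
    have nv: "nb m n d v \<noteq> v" using nb_ne mn av by auto
    have nw: "nb m n d' w \<noteq> w" using nb_ne mn bw by auto
    have oppd: "opp d < 4" "opp d' < 4" using opp_lt av bw by auto
    from ab have adj: "v = w \<or> {v, nb m n d v} = {w, nb m n d' w} \<or> {v, w} = {v, nb m n d v} \<or> {v, w} = {w, nb m n d' w}"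
      unfolding inc_adj_def av bw by simp
    show "colr m n out a \<noteq> colr m n out b"
    proof (cases "v = w")
      case True
      then have "d \<noteq> d'" using ab av bw by auto
      have "\<forall>e<4. \<forall>e'<4. e \<noteq> e' \<longrightarrow> out v e \<noteq> out v e'" using C av(2) unfolding COND_def by blast
      then show ?thesis unfolding ca cb using True \<open>d \<noteq> d'\<close> av(3) bw(3) by simp
    next
      case vw: False
      consider "{v, nb m n d v} = {w, nb m n d' w}" | "{v, w} = {v, nb m n d v}" | "{v, w} = {w, nb m n d' w}"
        using adj vw by blast
      then show ?thesis
      proof cases
        case 1
        then have w: "w = nb m n d v" and v: "v = nb m n d' w" using vw by (auto simp: doubleton_eq_iff)
        have o: "nb m n (opp d) w = v" unfolding w by (rule nb_opp[OF av(2) av(3)])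
        have "nb m n d' w = nb m n (opp d) w" using v o by simp
        then have "d' = opp d" by (rule nb_inj[OF mn bw(2) bw(3) oppd(1)])
        then have "out w d' = out (nb m n d v) (opp d)" unfolding w by simp
        then show ?thesis unfolding ca cb using Cv[OF av(3) av(3)] by simp
      next
        case 2
        then have w: "w = nb m n d v" using vw by (auto simp: doubleton_eq_iff)
        have o: "nb m n (opp d) w = v" unfolding w by (rule nb_opp[OF av(2) av(3)])
        have oo: "opp (opp d) = d" using opp_opp av by auto
        have "out (nb m n (opp d) w) (opp (opp d)) \<noteq> out w d'" by (rule Cw[OF oppd(1) bw(3)])
        then show ?thesis unfolding ca cb o oo .
      next
        case 3
        then have v: "v = nb m n d' w" using vw by (auto simp: doubleton_eq_iff)
        have o: "nb m n (opp d') v = w" unfolding v by (rule nb_opp[OF bw(2) bw(3)])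
        have oo: "opp (opp d') = d'" using opp_opp bw by auto
        have "out (nb m n (opp d') v) (opp (opp d')) \<noteq> out v d" by (rule Cv[OF oppd(2) av(3)])
        then show ?thesis unfolding ca cb o oo by simp
      qed
    qed
  qed
qed


definition g5 :: "nat \<times> nat \<Rightarrow> nat" where "g5 v = (fst v + 2 * snd v) mod 5"
definition out5 :: "nat \<Rightarrow> nat \<Rightarrow> nat \<times> nat \<Rightarrow> nat \<Rightarrow> nat" where
  "out5 m n v d = g5 (nb m n d v)"

definition del5 :: "nat \<Rightarrow> nat" where
  "del5 d = (if d = 0 then 1 else if d = 1 then 4 else if d = 2 then 2 else 3)"

lemma L5: "(i + 2 * y) mod 5 = (i + 2 * (y mod 5)) mod (5::nat)"
  by (metis mod_add_right_eq mod_mult_right_eq)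
lemma L5': "(y + i) mod 5 = ((y mod 5) + i) mod (5::nat)"
  by (metis mod_add_left_eq)
lemma aux5: assumes "5 dvd m" "m > 0" shows "(x + m - 1) mod 5 = (x + 4) mod (5::nat)"
proof -
  obtain k where k: "m = 5 * k" using assms by (auto elim: dvdE)
  then have "k > 0" using assms by simp
  then have "x + m - 1 = (x + 4) + 5 * (k - 1)" using k by simp
  then show ?thesis by simp
qed

lemma g5_nb:
  assumes "5 dvd m" "5 dvd n" "m > 0" "n > 0"
  shows "g5 (nb m n d (i, j)) = (i + 2 * j + del5 d) mod 5"
proof -
  have A: "((i + 1) mod m) mod 5 = (i + 1) mod 5" using assms by (simp add: mod_mod_cancel)
  have B: "((i + m - 1) mod m) mod 5 = (i + 4) mod 5"
    using mod_mod_cancel[OF assms(1)] aux5[OF assms(1,3)] by metis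
  have C: "((j + 1) mod n) mod 5 = (j + 1) mod 5" using assms by (simp add: mod_mod_cancel)
  have D: "((j + n - 1) mod n) mod 5 = (j + 4) mod 5"
    using mod_mod_cancel[OF assms(2)] aux5[OF assms(2,4)] by metis
  consider "d = 0" | "d = 1" | "d = 2" | "d \<noteq> 0 \<and> d \<noteq> 1 \<and> d \<noteq> 2" by blast
  then show ?thesis
  proof cases
    case 1
    have "g5 (nb m n d (i, j)) = (((i + 1) mod m) + 2 * j) mod 5" using 1 by (simp add: g5_def nb_def nxt_def)
    also have "\<dots> = ((((i + 1) mod m) mod 5) + 2 * j) mod 5" by (rule L5')
    also have "\<dots> = (((i + 1) mod 5) + 2 * j) mod 5" by (simp only: A)
    also have "\<dots> = ((i + 1) + 2 * j) mod 5" by (rule L5'[symmetric])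
    also have "\<dots> = (i + 2 * j + del5 d) mod 5" using 1 by (simp add: del5_def add.commute add.left_commute)
    finally show ?thesis .
  next
    case 2
    have "g5 (nb m n d (i, j)) = (((i + m - 1) mod m) + 2 * j) mod 5" using 2 by (simp add: g5_def nb_def prv_def)
    also have "\<dots> = ((((i + m - 1) mod m) mod 5) + 2 * j) mod 5" by (rule L5')
    also have "\<dots> = (((i + 4) mod 5) + 2 * j) mod 5" by (simp only: B)
    also have "\<dots> = ((i + 4) + 2 * j) mod 5" by (rule L5'[symmetric])
    also have "\<dots> = (i + 2 * j + del5 d) mod 5" using 2 by (simp add: del5_def add.commute add.left_commute)
    finally show ?thesis .
  next
    case 3
    have "g5 (nb m n d (i, j)) = (i + 2 * ((j + 1) mod n)) mod 5" using 3 by (simp add: g5_def nb_def nxt_def)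
    also have "\<dots> = (i + 2 * (((j + 1) mod n) mod 5)) mod 5" by (rule L5)
    also have "\<dots> = (i + 2 * ((j + 1) mod 5)) mod 5" by (simp only: C)
    also have "\<dots> = (i + 2 * (j + 1)) mod 5" by (rule L5[symmetric])
    also have "\<dots> = (i + 2 * j + del5 d) mod 5" using 3 by (simp add: del5_def)
    finally show ?thesis .
  next
    case 4
    have "g5 (nb m n d (i, j)) = (i + 2 * ((j + n - 1) mod n)) mod 5" using 4 by (simp add: g5_def nb_def prv_def)
    also have "\<dots> = (i + 2 * (((j + n - 1) mod n) mod 5)) mod 5" by (rule L5)
    also have "\<dots> = (i + 2 * ((j + 4) mod 5)) mod 5" by (simp only: D)
    also have "\<dots> = (i + 2 * (j + 4)) mod 5" by (rule L5[symmetric])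
    also have "\<dots> = (i + 2 * j + 3) mod 5" by presburger
    also have "\<dots> = (i + 2 * j + del5 d) mod 5" using 4 by (simp add: del5_def)
    finally show ?thesis .
  qed
qed

lemma modcanc: "(x + a) mod 5 = (x + b) mod (5::nat) \<Longrightarrow> a < 5 \<Longrightarrow> b < 5 \<Longrightarrow> a = b"
  by presburger

lemma del5_lt: "del5 d < 5" unfolding del5_def by auto
lemma del5_ne0: "del5 d \<noteq> 0" unfolding del5_def by auto
lemma del5_inj: "d < 4 \<Longrightarrow> d' < 4 \<Longrightarrow> del5 d = del5 d' \<Longrightarrow> d = d'" unfolding del5_def by (auto split: if_splits)

lemma cond5:
  assumes "m \<ge> 3" "n \<ge> 3" "5 dvd m" "5 dvd n"
  shows "COND m n 5 (out5 m n)"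
  unfolding COND_def
proof (intro allI impI)
  fix v assume v: "inr m n v"
  obtain i j where ij: "v = (i, j)" by (cases v)
  have m0: "m > 0" "n > 0" using assms by auto
  have o: "out5 m n v d = (i + 2 * j + del5 d) mod 5" for d
    unfolding out5_def ij using g5_nb[OF assms(3,4) m0] .
  have c1: "\<forall>d<4. out5 m n v d < 5" unfolding o by simp
  have c2: "\<forall>d<4. \<forall>d'<4. d \<noteq> d' \<longrightarrow> out5 m n v d \<noteq> out5 m n v d'"
  proof (intro allI impI)
    fix d d' :: nat assume "d < 4" "d' < 4" "d \<noteq> d'"
    then have "del5 d \<noteq> del5 d'" using del5_inj by blast
    then show "out5 m n v d \<noteq> out5 m n v d'" unfolding o
      using modcanc[of "i + 2 * j" "del5 d" "del5 d'"] del5_lt[of d] del5_lt[of d'] by blast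
  qed
  have c3: "\<forall>d<4. \<forall>d'<4. out5 m n (nb m n d v) (opp d) \<noteq> out5 m n v d'"
  proof (intro allI impI)
    fix d d' :: nat assume d: "d < 4" "d' < 4"
    have "out5 m n (nb m n d v) (opp d) = g5 v" unfolding out5_def nb_opp[OF v d(1)] ..
    also have "\<dots> = (i + 2 * j) mod 5" by (simp add: g5_def ij)
    finally show "out5 m n (nb m n d v) (opp d) \<noteq> out5 m n v d'"
      unfolding o using modcanc[of "i + 2 * j" 0 "del5 d'"] del5_lt[of d'] del5_ne0[of d'] by auto
  qed
  show "(\<forall>d<4. out5 m n v d < 5) \<and> (\<forall>d<4. \<forall>d'<4. d \<noteq> d' \<longrightarrow> out5 m n v d \<noteq> out5 m n v d') \<and>
     (\<forall>d<4. \<forall>d'<4. out5 m n (nb m n d v) (opp d) \<noteq> out5 m n v d')" by (rule conjI[OF c1 conjI[OF c2 c3]])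
qed


definition rr :: "nat \<Rightarrow> nat" where "rr m = (if m mod 3 = 0 then 0 else if m mod 3 = 1 then 4 else 5)"
definition bs :: "nat \<Rightarrow> nat" where "bs m = m - rr m"
definition lab :: "nat \<Rightarrow> nat \<Rightarrow> nat" where
  "lab m i = (if i \<le> bs m then i mod 3 else i - bs m + (if rr m = 4 then 2 else 5))"

definition edgesL :: "(nat \<times> nat) list" where
  "edgesL = [(0,1),(1,2),(2,0),(0,3),(3,4),(4,5),(5,0),(0,6),(6,7),(7,8),(8,9),(9,0)]"

lemma rr_cases: "rr m = 0 \<and> 3 dvd m \<or> rr m = 4 \<and> m mod 3 = 1 \<or> rr m = 5 \<and> m mod 3 = 2"
  unfolding rr_def by auto

lemma E3: "x mod 3 = 0 \<or> x mod 3 = 1 \<or> x mod 3 = (2::nat)" by presburger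

lemma lab_edge:
  assumes m3: "m \<ge> 3" and im: "i < m"
  shows "(lab m i, lab m (nxt m i)) \<in> set edgesL"
proof -
  define r where "r = rr m"
  define b where "b = bs m"
  have bdef: "b = m - r" unfolding b_def r_def bs_def ..
  have rc: "r = 0 \<and> 3 dvd m \<or> r = 4 \<and> m mod 3 = 1 \<or> r = 5 \<and> m mod 3 = 2"
    unfolding r_def by (rule rr_cases)
  have rm: "r \<le> m" using rc m3 by presburger
  have b3: "b mod 3 = 0" using rc m3 unfolding bdef by presburger
  have lab_lo: "\<And>k. k \<le> b \<Longrightarrow> lab m k = k mod 3" unfolding lab_def b_def by simp
  have lab_hi: "\<And>k. k > b \<Longrightarrow> lab m k = k - b + (if r = 4 then 2 else 5)"
    unfolding lab_def b_def r_def by simp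
  show ?thesis
  proof (cases "i + 1 = m")
    case True
    then have nx: "nxt m i = 0" using nxt_eq[OF im] by simp
    have l0: "lab m 0 = 0" using lab_lo[of 0] by simp
    have "lab m i = 2 \<or> lab m i = 5 \<or> lab m i = 9"
    proof -
      consider "r = 0 \<and> 3 dvd m" | "r = 4 \<and> m mod 3 = 1" | "r = 5 \<and> m mod 3 = 2" using rc by blast
      then show ?thesis
      proof cases
        case 1
        then have "i \<le> b" "i mod 3 = 2" using True bdef m3 by (simp, presburger)
        then show ?thesis using lab_lo by simp
      next
        case 2
        then have "i > b" "i - b = 3" using True bdef m3 by presburger+
        then show ?thesis using lab_hi[of i] 2 by simp
      next
        case 3
        then have "i > b" "i - b = 4" using True bdef m3 by presburger+
        then show ?thesis using lab_hi[of i] 3 by simp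
      qed
    qed
    then show ?thesis unfolding nx l0 edgesL_def by auto
  next
    case False
    then have nx: "nxt m i = i + 1" using nxt_eq[OF im] by simp
    show ?thesis unfolding nx
    proof (cases "i + 1 \<le> b")
      case True
      then have "lab m i = i mod 3" "lab m (i+1) = (i+1) mod 3" using lab_lo by auto
      moreover have "i mod 3 = 0 \<and> (i+1) mod 3 = 1 \<or> i mod 3 = 1 \<and> (i+1) mod 3 = 2 \<or> i mod 3 = 2 \<and> (i+1) mod 3 = 0"
        by presburger
      ultimately show "(lab m i, lab m (i + 1)) \<in> set edgesL" unfolding edgesL_def by auto
    next
      case nb: False
      show "(lab m i, lab m (i + 1)) \<in> set edgesL"
      proof (cases "i = b")
        case True
        then have "lab m i = 0" using lab_lo b3 by simp
        moreover have "lab m (i+1) = 1 + (if r = 4 then 2 else 5)" using lab_hi[of "i+1"] True by simp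
        ultimately show ?thesis unfolding edgesL_def by auto
      next
        case ib: False
        then have ib': "i > b" using nb by simp
        have li: "lab m i = i - b + (if r = 4 then 2 else 5)" using lab_hi ib' by simp
        have li1: "lab m (i+1) = i + 1 - b + (if r = 4 then 2 else 5)" using lab_hi ib' by simp
        have "r = 4 \<and> (i - b = 1 \<or> i - b = 2) \<or> r = 5 \<and> (i - b = 1 \<or> i - b = 2 \<or> i - b = 3)"
          using rc ib' False im bdef rm by auto
        then show ?thesis unfolding li li1 edgesL_def by auto
      qed
    qed
  qed
qed


definition tbl :: "nat list list list" where
  "tbl = [[[2, 5, 1, 0], [0, 5, 2, 3], [5, 3, 4, 1], [0, 3, 5, 4], [3, 4, 0, 1], [5, 3, 4, 2], [4, 0, 2, 3], [3, 4, 0, 5], [3, 1, 5, 2], [1, 2, 3, 4]], [[5, 3, 0, 4], [5, 1, 4, 2], [2, 0, 1, 3], [3, 2, 4, 1], [1, 2, 5, 0], [2, 0, 1, 3], [3, 5, 2, 1], [4, 1, 5, 0], [1, 0, 4, 2], [3, 0, 2, 5]], [[4, 2, 0, 3], [4, 3, 2, 1], [0, 4, 1, 5], [2, 5, 4, 1], [5, 3, 2, 0], [0, 5, 1, 4], [5, 4, 2, 1], [1, 3, 5, 0], [0, 3, 2, 4], [0, 4, 5, 1]], [[5, 4, 3, 1], [1, 4, 5, 2], [4, 2, 0, 3], [4, 1, 5, 2], [4, 2, 1, 0], [4, 0, 2, 3], [2, 1, 5, 0], [1, 2, 0, 4], [2, 4, 1, 5], [4, 5, 0, 3]], [[1, 0,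 2, 4], [5, 0, 4, 3], [3, 1, 5, 2], [0, 3, 1, 5], [3, 5, 0, 2], [2, 5, 3, 1], [3, 4, 0, 5], [4, 3, 5, 2], [1, 3, 4, 0], [1, 2, 3, 5]], [[4, 3, 0, 2], [4, 2, 3, 1], [0, 4, 1, 5], [1, 2, 4, 5], [5, 1, 2, 0], [1, 0, 5, 4], [1, 2, 4, 5], [2, 1, 3, 0], [0, 5, 2, 4], [0, 4, 5, 3]], [[3, 4, 0, 5], [5, 4, 3, 2], [4, 2, 1, 0], [5, 1, 3, 2], [1, 5, 2, 4], [4, 0, 1, 3], [5, 1, 3, 2], [1, 2, 4, 0], [2, 0, 1, 5], [4, 0, 2, 3]], [[1, 2, 5, 4], [4, 1, 2, 0], [1, 5, 0, 3], [4, 0, 1, 3], [3, 0, 5, 2], [0, 2, 3, 1], [1, 4, 2, 3], [4, 5, 3, 0], [5, 4, 0, 1], [1, 5, 3, 2]], [[5, 3, 4, 0], [0, 3, 1, 2], [3, 4, 2, 5], [0, 5, 3, 2], [0, 4, 2, 1], [3, 4, 1, 5], [3, 5, 0, 2], [5, 2, 3, 1], [1, 2, 0, 4], [3, 4, 2, 5]], [[4, 1, 0, 3], [1, 4, 3, 2], [0, 1, 2, 5], [2, 1, 4, 5], [2, 5, 1, 3], [0, 2, 5, 4], [1, 4, 5, 2], [2, 0, 1, 3], [0, 3, 2, 5], [0, 1, 5, 4]]]"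

definition tab :: "nat \<Rightarrow> nat \<Rightarrow> nat \<Rightarrow> nat" where "tab a b d = tbl ! a ! b ! d"

definition trips :: "(nat \<times> nat \<times> nat) list" where "trips = [(0,1,2), (0,3,4), (0,6,7), (1,2,0), (2,0,1), (2,0,3), (2,0,6), (3,4,5), (4,5,0), (5,0,1), (5,0,3), (5,0,6), (6,7,8), (7,8,9), (8,9,0), (9,0,1), (9,0,3), (9,0,6)]"

definition ok :: "nat \<Rightarrow> nat \<Rightarrow> nat \<Rightarrow> nat \<Rightarrow> nat \<Rightarrow> nat \<Rightarrow> bool" where
  "ok a b c p q r \<longleftrightarrow> (let os = [tab b q 0, tab b q 1, tab b q 2, tab b q 3] in
     distinct os \<and> list_all (\<lambda>x. x < 6) os \<and>
     list_all (\<lambda>x. x \<notin> set os) [tab c q 1, tab a q 0, tab b r 3, tab b p 2])"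

lemma tab_vals: "tab 0 0 0 = 2" "tab 0 0 1 = 5" "tab 0 0 2 = 1" "tab 0 0 3 = 0" "tab 0 1 0 = 0" "tab 0 1 1 = 5" "tab 0 1 2 = 2" "tab 0 1 3 = 3" "tab 0 2 0 = 5" "tab 0 2 1 = 3" "tab 0 2 2 = 4" "tab 0 2 3 = 1" "tab 0 3 0 = 0" "tab 0 3 1 = 3" "tab 0 3 2 = 5" "tab 0 3 3 = 4" "tab 0 4 0 = 3" "tab 0 4 1 = 4" "tab 0 4 2 = 0" "tab 0 4 3 = 1" "tab 0 5 0 = 5" "tab 0 5 1 = 3" "tab 0 5 2 = 4" "tab 0 5 3 = 2" "tab 0 6 0 = 4" "tab 0 6 1 = 0" "tab 0 6 2 = 2" "tab 0 6 3 = 3" "tab 0 7 0 = 3" "tab 0 7 1 = 4" "tab 0 7 2 = 0" "tab 0 7 3 = 5" "tab 0 8 0 = 3" "tab 0 8 1 = 1" "tab 0 8 2 = 5" "tab 0 8 3 = 2" "tab 0 9 0 = 1" "tab 0 9 1 = 2" "tab 0 9 2 = 3" "tab 0 9 3 = 4" "tab 1 0 0 = 5" "tab 1 0 1 = 3" "tab 1 0 2 = 0" "tab 1 0 3 = 4" "tab 1 1 0 = 5" "tab 1 1 1 = 1" "tab 1 1 2 = 4" "tab 1 1 3 = 2" "tab 1 2 0 = 2" "tab 1 2 1 = 0" "tab 1 2 2 = 1" "tab 1 2 3 = 3" "tab 1 3 0 = 3" "tab 1 3 1 = 2" "tab 1 3 2 = 4" "tab 1 3 3 = 1" "tab 1 4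 0 = 1" "tab 1 4 1 = 2" "tab 1 4 2 = 5" "tab 1 4 3 = 0" "tab 1 5 0 = 2" "tab 1 5 1 = 0" "tab 1 5 2 = 1" "tab 1 5 3 = 3" "tab 1 6 0 = 3" "tab 1 6 1 = 5" "tab 1 6 2 = 2" "tab 1 6 3 = 1" "tab 1 7 0 = 4" "tab 1 7 1 = 1" "tab 1 7 2 = 5" "tab 1 7 3 = 0" "tab 1 8 0 = 1" "tab 1 8 1 = 0" "tab 1 8 2 = 4" "tab 1 8 3 = 2" "tab 1 9 0 = 3" "tab 1 9 1 = 0" "tab 1 9 2 = 2" "tab 1 9 3 = 5" "tab 2 0 0 = 4" "tab 2 0 1 = 2" "tab 2 0 2 = 0" "tab 2 0 3 = 3" "tab 2 1 0 = 4" "tab 2 1 1 = 3" "tab 2 1 2 = 2" "tab 2 1 3 = 1" "tab 2 2 0 = 0" "tab 2 2 1 = 4" "tab 2 2 2 = 1" "tab 2 2 3 = 5" "tab 2 3 0 = 2" "tab 2 3 1 = 5" "tab 2 3 2 = 4" "tab 2 3 3 = 1" "tab 2 4 0 = 5" "tab 2 4 1 = 3" "tab 2 4 2 = 2" "tab 2 4 3 = 0" "tab 2 5 0 = 0" "tab 2 5 1 = 5" "tab 2 5 2 = 1" "tab 2 5 3 = 4" "tab 2 6 0 = 5" "tab 2 6 1 = 4" "tab 2 6 2 = 2" "tab 2 6 3 = 1" "tab 2 7 0 = 1" "tab 2 7 1 = 3" "tab 2 7 2 = 5" "tab 2 7 3 = 0" "tab 2 8 0 = 0" "tab 2 8 1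 = 3" "tab 2 8 2 = 2" "tab 2 8 3 = 4" "tab 2 9 0 = 0" "tab 2 9 1 = 4" "tab 2 9 2 = 5" "tab 2 9 3 = 1" "tab 3 0 0 = 5" "tab 3 0 1 = 4" "tab 3 0 2 = 3" "tab 3 0 3 = 1" "tab 3 1 0 = 1" "tab 3 1 1 = 4" "tab 3 1 2 = 5" "tab 3 1 3 = 2" "tab 3 2 0 = 4" "tab 3 2 1 = 2" "tab 3 2 2 = 0" "tab 3 2 3 = 3" "tab 3 3 0 = 4" "tab 3 3 1 = 1" "tab 3 3 2 = 5" "tab 3 3 3 = 2" "tab 3 4 0 = 4" "tab 3 4 1 = 2" "tab 3 4 2 = 1" "tab 3 4 3 = 0" "tab 3 5 0 = 4" "tab 3 5 1 = 0" "tab 3 5 2 = 2" "tab 3 5 3 = 3" "tab 3 6 0 = 2" "tab 3 6 1 = 1" "tab 3 6 2 = 5" "tab 3 6 3 = 0" "tab 3 7 0 = 1" "tab 3 7 1 = 2" "tab 3 7 2 = 0" "tab 3 7 3 = 4" "tab 3 8 0 = 2" "tab 3 8 1 = 4" "tab 3 8 2 = 1" "tab 3 8 3 = 5" "tab 3 9 0 = 4" "tab 3 9 1 = 5" "tab 3 9 2 = 0" "tab 3 9 3 = 3" "tab 4 0 0 = 1" "tab 4 0 1 = 0" "tab 4 0 2 = 2" "tab 4 0 3 = 4" "tab 4 1 0 = 5" "tab 4 1 1 = 0" "tab 4 1 2 = 4" "tab 4 1 3 = 3" "tab 4 2 0 = 3" "tab 4 2 1 = 1" "tab 4 2 2 =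 5" "tab 4 2 3 = 2" "tab 4 3 0 = 0" "tab 4 3 1 = 3" "tab 4 3 2 = 1" "tab 4 3 3 = 5" "tab 4 4 0 = 3" "tab 4 4 1 = 5" "tab 4 4 2 = 0" "tab 4 4 3 = 2" "tab 4 5 0 = 2" "tab 4 5 1 = 5" "tab 4 5 2 = 3" "tab 4 5 3 = 1" "tab 4 6 0 = 3" "tab 4 6 1 = 4" "tab 4 6 2 = 0" "tab 4 6 3 = 5" "tab 4 7 0 = 4" "tab 4 7 1 = 3" "tab 4 7 2 = 5" "tab 4 7 3 = 2" "tab 4 8 0 = 1" "tab 4 8 1 = 3" "tab 4 8 2 = 4" "tab 4 8 3 = 0" "tab 4 9 0 = 1" "tab 4 9 1 = 2" "tab 4 9 2 = 3" "tab 4 9 3 = 5" "tab 5 0 0 = 4" "tab 5 0 1 = 3" "tab 5 0 2 = 0" "tab 5 0 3 = 2" "tab 5 1 0 = 4" "tab 5 1 1 = 2" "tab 5 1 2 = 3" "tab 5 1 3 = 1" "tab 5 2 0 = 0" "tab 5 2 1 = 4" "tab 5 2 2 = 1" "tab 5 2 3 = 5" "tab 5 3 0 = 1" "tab 5 3 1 = 2" "tab 5 3 2 = 4" "tab 5 3 3 = 5" "tab 5 4 0 = 5" "tab 5 4 1 = 1" "tab 5 4 2 = 2" "tab 5 4 3 = 0" "tab 5 5 0 = 1" "tab 5 5 1 = 0" "tab 5 5 2 = 5" "tab 5 5 3 = 4" "tab 5 6 0 = 1" "tab 5 6 1 = 2" "tab 5 6 2 = 4" "tab 5 6 3 = 5"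 "tab 5 7 0 = 2" "tab 5 7 1 = 1" "tab 5 7 2 = 3" "tab 5 7 3 = 0" "tab 5 8 0 = 0" "tab 5 8 1 = 5" "tab 5 8 2 = 2" "tab 5 8 3 = 4" "tab 5 9 0 = 0" "tab 5 9 1 = 4" "tab 5 9 2 = 5" "tab 5 9 3 = 3" "tab 6 0 0 = 3" "tab 6 0 1 = 4" "tab 6 0 2 = 0" "tab 6 0 3 = 5" "tab 6 1 0 = 5" "tab 6 1 1 = 4" "tab 6 1 2 = 3" "tab 6 1 3 = 2" "tab 6 2 0 = 4" "tab 6 2 1 = 2" "tab 6 2 2 = 1" "tab 6 2 3 = 0" "tab 6 3 0 = 5" "tab 6 3 1 = 1" "tab 6 3 2 = 3" "tab 6 3 3 = 2" "tab 6 4 0 = 1" "tab 6 4 1 = 5" "tab 6 4 2 = 2" "tab 6 4 3 = 4" "tab 6 5 0 = 4" "tab 6 5 1 = 0" "tab 6 5 2 = 1" "tab 6 5 3 = 3" "tab 6 6 0 = 5" "tab 6 6 1 = 1" "tab 6 6 2 = 3" "tab 6 6 3 = 2" "tab 6 7 0 = 1" "tab 6 7 1 = 2" "tab 6 7 2 = 4" "tab 6 7 3 = 0" "tab 6 8 0 = 2" "tab 6 8 1 = 0" "tab 6 8 2 = 1" "tab 6 8 3 = 5" "tab 6 9 0 = 4" "tab 6 9 1 = 0" "tab 6 9 2 = 2" "tab 6 9 3 = 3" "tab 7 0 0 = 1" "tab 7 0 1 = 2" "tab 7 0 2 = 5" "tab 7 0 3 = 4" "tab 7 1 0 = 4" "tab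 7 1 1 = 1" "tab 7 1 2 = 2" "tab 7 1 3 = 0" "tab 7 2 0 = 1" "tab 7 2 1 = 5" "tab 7 2 2 = 0" "tab 7 2 3 = 3" "tab 7 3 0 = 4" "tab 7 3 1 = 0" "tab 7 3 2 = 1" "tab 7 3 3 = 3" "tab 7 4 0 = 3" "tab 7 4 1 = 0" "tab 7 4 2 = 5" "tab 7 4 3 = 2" "tab 7 5 0 = 0" "tab 7 5 1 = 2" "tab 7 5 2 = 3" "tab 7 5 3 = 1" "tab 7 6 0 = 1" "tab 7 6 1 = 4" "tab 7 6 2 = 2" "tab 7 6 3 = 3" "tab 7 7 0 = 4" "tab 7 7 1 = 5" "tab 7 7 2 = 3" "tab 7 7 3 = 0" "tab 7 8 0 = 5" "tab 7 8 1 = 4" "tab 7 8 2 = 0" "tab 7 8 3 = 1" "tab 7 9 0 = 1" "tab 7 9 1 = 5" "tab 7 9 2 = 3" "tab 7 9 3 = 2" "tab 8 0 0 = 5" "tab 8 0 1 = 3" "tab 8 0 2 = 4" "tab 8 0 3 = 0" "tab 8 1 0 = 0" "tab 8 1 1 = 3" "tab 8 1 2 = 1" "tab 8 1 3 = 2" "tab 8 2 0 = 3" "tab 8 2 1 = 4" "tab 8 2 2 = 2" "tab 8 2 3 = 5" "tab 8 3 0 = 0" "tab 8 3 1 = 5" "tab 8 3 2 = 3" "tab 8 3 3 = 2" "tab 8 4 0 = 0" "tab 8 4 1 = 4" "tab 8 4 2 = 2" "tab 8 4 3 = 1" "tab 8 5 0 = 3" "tab 8 5 1 = 4" "tab 8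 5 2 = 1" "tab 8 5 3 = 5" "tab 8 6 0 = 3" "tab 8 6 1 = 5" "tab 8 6 2 = 0" "tab 8 6 3 = 2" "tab 8 7 0 = 5" "tab 8 7 1 = 2" "tab 8 7 2 = 3" "tab 8 7 3 = 1" "tab 8 8 0 = 1" "tab 8 8 1 = 2" "tab 8 8 2 = 0" "tab 8 8 3 = 4" "tab 8 9 0 = 3" "tab 8 9 1 = 4" "tab 8 9 2 = 2" "tab 8 9 3 = 5" "tab 9 0 0 = 4" "tab 9 0 1 = 1" "tab 9 0 2 = 0" "tab 9 0 3 = 3" "tab 9 1 0 = 1" "tab 9 1 1 = 4" "tab 9 1 2 = 3" "tab 9 1 3 = 2" "tab 9 2 0 = 0" "tab 9 2 1 = 1" "tab 9 2 2 = 2" "tab 9 2 3 = 5" "tab 9 3 0 = 2" "tab 9 3 1 = 1" "tab 9 3 2 = 4" "tab 9 3 3 = 5" "tab 9 4 0 = 2" "tab 9 4 1 = 5" "tab 9 4 2 = 1" "tab 9 4 3 = 3" "tab 9 5 0 = 0" "tab 9 5 1 = 2" "tab 9 5 2 = 5" "tab 9 5 3 = 4" "tab 9 6 0 = 1" "tab 9 6 1 = 4" "tab 9 6 2 = 5" "tab 9 6 3 = 2" "tab 9 7 0 = 2" "tab 9 7 1 = 0" "tab 9 7 2 = 1" "tab 9 7 3 = 3" "tab 9 8 0 = 0" "tab 9 8 1 = 3" "tab 9 8 2 = 2" "tab 9 8 3 = 5" "tab 9 9 0 = 0" "tab 9 9 1 = 1" "tab 9 9 2 = 5" "tab 9 9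 3 = 4"
  by (simp_all add: tab_def tbl_def)

lemma table_check: "list_all (\<lambda>(a,b,c). list_all (\<lambda>(p,q,r). ok a b c p q r) trips) trips"
  by (simp only: trips_def list.pred_inject prod.case ok_def Let_def tab_vals) simp
lemma trips_of_edges: "(a, b) \<in> set edgesL \<Longrightarrow> (b, c) \<in> set edgesL \<Longrightarrow> (a, b, c) \<in> set trips"
  unfolding edgesL_def trips_def set_simps insert_iff empty_iff prod.inject
  apply (elim disjE conjE)
  apply (simp_all)
  done

lemma ok_all: "(a, b) \<in> set edgesL \<Longrightarrow> (b, c) \<in> set edgesL \<Longrightarrow>
   (p, q) \<in> set edgesL \<Longrightarrow> (q, r) \<in> set edgesL \<Longrightarrow> ok a b c p q r"
proof -
  assume e: "(a, b) \<in> set edgesL" "(b, c) \<in> set edgesL" "(p, q) \<in> set edgesL" "(q, r) \<in> set edgesL"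
  have T1: "(a, b, c) \<in> set trips" using trips_of_edges e(1,2) .
  have T2: "(p, q, r) \<in> set trips" using trips_of_edges e(3,4) .
  have "\<forall>x\<in>set trips. (\<lambda>(a,b,c). list_all (\<lambda>(p,q,r). ok a b c p q r) trips) x"
    using table_check by (simp only: list_all_iff)
  from bspec[OF this T1] have "list_all (\<lambda>(p,q,r). ok a b c p q r) trips" by (simp only: prod.case)
  then have "\<forall>y\<in>set trips. (\<lambda>(p,q,r). ok a b c p q r) y" by (simp only: list_all_iff)
  from bspec[OF this T2] show "ok a b c p q r" by (simp only: prod.case)
qed

lemma nxt_prv: "i < m \<Longrightarrow> nxt m (prv m i) = i"
  by (simp add: nxt_eq prv_eq)
lemma prv_lt: "i < m \<Longrightarrow> prv m i < m" by (auto simp: prv_def)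

definition out6 :: "nat \<Rightarrow> nat \<Rightarrow> nat \<times> nat \<Rightarrow> nat \<Rightarrow> nat" where
  "out6 m n v d = tab (lab m (fst v)) (lab n (snd v)) d"

lemma less4: "(d::nat) < 4 \<Longrightarrow> d = 0 \<or> d = 1 \<or> d = 2 \<or> d = 3" by auto

lemma cond6:
  assumes m3: "m \<ge> 3" and n3: "n \<ge> 3"
  shows "COND m n 6 (out6 m n)"
  unfolding COND_def
proof (intro allI impI)
  fix v assume v: "inr m n v"
  obtain i j where ij: "v = (i, j)" by (cases v)
  have im: "i < m" and jn: "j < n" using v ij by (auto simp: inr_def)
  define a where "a = lab m (prv m i)"
  define b where "b = lab m i"
  define c where "c = lab m (nxt m i)"
  define p where "p = lab n (prv n j)"
  define q where "q = lab n j"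
  define r where "r = lab n (nxt n j)"
  have "(a, b) \<in> set edgesL" unfolding a_def b_def
    using lab_edge[OF m3 prv_lt[OF im]] nxt_prv[OF im] by simp
  moreover have "(b, c) \<in> set edgesL" unfolding b_def c_def using lab_edge[OF m3 im] .
  moreover have "(p, q) \<in> set edgesL" unfolding p_def q_def
    using lab_edge[OF n3 prv_lt[OF jn]] nxt_prv[OF jn] by simp
  moreover have "(q, r) \<in> set edgesL" unfolding q_def r_def using lab_edge[OF n3 jn] .
  ultimately have ok: "ok a b c p q r" by (rule ok_all)
  have o: "out6 m n v d = tab b q d" for d unfolding out6_def ij b_def q_def by simp
  have in0: "out6 m n (nb m n 0 v) (opp 0) = tab c q 1" unfolding out6_def nb_def opp_def ij c_def q_def by simp
  have in1: "out6 m n (nb m n 1 v) (opp 1) = tab a q 0" unfolding out6_def nb_def opp_def ij a_def q_def by simp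
  have in2: "out6 m n (nb m n 2 v) (opp 2) = tab b r 3" unfolding out6_def nb_def opp_def ij b_def r_def by simp
  have in3: "out6 m n (nb m n 3 v) (opp 3) = tab b p 2" unfolding out6_def nb_def opp_def ij b_def p_def by simp
  have okk: "distinct [tab b q 0, tab b q 1, tab b q 2, tab b q 3]"
    "list_all (\<lambda>x. x < 6) [tab b q 0, tab b q 1, tab b q 2, tab b q 3]"
    "list_all (\<lambda>x. x \<notin> set [tab b q 0, tab b q 1, tab b q 2, tab b q 3]) [tab c q 1, tab a q 0, tab b r 3, tab b p 2]"
    using ok unfolding ok_def Let_def by auto
  have c1: "\<forall>d<4. out6 m n v d < 6"
    using okk(2) less4 unfolding o by auto
  have c2: "\<forall>d<4. \<forall>d'<4. d \<noteq> d' \<longrightarrow> out6 m n v d \<noteq> out6 m n v d'"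
  proof (intro allI impI)
    fix d d' :: nat assume d: "d < 4" "d' < 4" "d \<noteq> d'"
    from less4[OF d(1)] less4[OF d(2)] show "out6 m n v d \<noteq> out6 m n v d'" unfolding o using okk(1) d(3)
      by (elim disjE) simp_all
  qed
  have c3: "\<forall>d<4. \<forall>d'<4. out6 m n (nb m n d v) (opp d) \<noteq> out6 m n v d'"
  proof (intro allI impI)
    fix d d' :: nat assume d: "d < 4" "d' < 4"
    from less4[OF d(1)] less4[OF d(2)] show "out6 m n (nb m n d v) (opp d) \<noteq> out6 m n v d'"
      using okk(3) in0 in1 in2 in3 unfolding o
      by (elim disjE) simp_all
  qed
  show "(\<forall>d<4. out6 m n v d < 6) \<and> (\<forall>d<4. \<forall>d'<4. d \<noteq> d' \<longrightarrow> out6 m n v d \<noteq> out6 m n v d') \<and>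
     (\<forall>d<4. \<forall>d'<4. out6 m n (nb m n d v) (opp d) \<noteq> out6 m n v d')" by (rule conjI[OF c1 conjI[OF c2 c3]])
qed


lemma nxt_prv': "i < m \<Longrightarrow> nxt m (prv m i) = i" by (simp add: nxt_eq prv_eq)
lemma nxt_lt': "i < m \<Longrightarrow> nxt m i < m" by (auto simp: nxt_def)
lemma prv_lt': "i < m \<Longrightarrow> prv m i < m" by (auto simp: prv_def)
lemma prv_nxt: "i < m \<Longrightarrow> prv m (nxt m i) = i"
  using prv_eq[OF nxt_lt'[of i m]] nxt_eq[of i m] by auto

lemma sum_nxt: "(\<Sum>i<m. f (nxt m i)) = (\<Sum>i<m. (f i :: int))"
proof -
  have "bij_betw (nxt m) {..<m} {..<m}"
    by (rule bij_betw_byWitness[where f' = "prv m"]) (auto simp: prv_nxt nxt_prv' nxt_lt' prv_lt')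
  then show ?thesis by (rule sum.reindex_bij_betw)
qed

lemma sum_prv: "(\<Sum>i<m. f (prv m i)) = (\<Sum>i<m. (f i :: int))"
proof -
  have "bij_betw (prv m) {..<m} {..<m}"
    by (rule bij_betw_byWitness[where f' = "nxt m"]) (auto simp: prv_nxt nxt_prv' nxt_lt' prv_lt')
  then show ?thesis by (rule sum.reindex_bij_betw)
qed

definition ind :: "nat \<Rightarrow> int" where "ind x = (if x = 0 then 1 else 0)"

lemma five_one:
  assumes "distinct [a, b, c, d, e]" "a < 5" "b < 5" "c < 5" "d < 5" "e < (5::nat)"
  shows "ind a + ind b + ind c + ind d + ind e = 1"
proof -
  have "card {a, b, c, d, e} = 5" using assms(1) by simp
  moreover have "{a, b, c, d, e} \<subseteq> {..<5}" using assms by auto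
  ultimately have "{a, b, c, d, e} = {..<5}" by (simp add: card_subset_eq)
  then have "0 \<in> {a, b, c, d, e}" by auto
  then show ?thesis using assms(1) unfolding ind_def by auto
qed

lemma quad: "(a::int) + 3 * s + b = 0 \<Longrightarrow> 4 * s^2 \<le> a^2 + b^2"
proof -
  assume h: "a + 3 * s + b = 0"
  have "0 \<le> (s + a)^2 + (s + b)^2" by simp
  also have "\<dots> = 2 * s^2 + 2 * s * (a + b) + a^2 + b^2" by (simp add: power2_eq_square algebra_simps)
  also have "a + b = - 3 * s" using h by simp
  finally show ?thesis by (simp add: power2_eq_square algebra_simps)
qed

lemma count5:
  assumes n0: "n > 0" and m0: "m > 0"
    and P: "\<And>i j. i < m \<Longrightarrow> j < n \<Longrightarrow>
       distinct [G i j, G (nxt m i) j, G (prv m i) j, G i (nxt n j), G i (prv n j)] \<and>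
       G i j < 5 \<and> G (nxt m i) j < 5 \<and> G (prv m i) j < 5 \<and> G i (nxt n j) < 5 \<and> G i (prv n j) < (5::nat)"
  shows "5 dvd m"
proof -
  define r where "r j = (\<Sum>i<m. ind (G i j))" for j
  have rec: "3 * r j + r (nxt n j) + r (prv n j) = int m" if j: "j < n" for j
  proof -
    have "(\<Sum>i<m. ind (G i j) + ind (G (nxt m i) j) + ind (G (prv m i) j) + ind (G i (nxt n j)) + ind (G i (prv n j)))
          = (\<Sum>i<m. (1::int))"
      using P j by (intro sum.cong refl) (auto intro!: five_one)
    also have "\<dots> = int m" by simp
    finally have "(\<Sum>i<m. ind (G i j)) + (\<Sum>i<m. ind (G (nxt m i) j)) + (\<Sum>i<m. ind (G (prv m i) j))
        + (\<Sum>i<m. ind (G i (nxt n j))) + (\<Sum>i<m. ind (G i (prv n j))) = int m"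
      by (simp add: sum.distrib)
    moreover have "(\<Sum>i<m. ind (G (nxt m i) j)) = r j" unfolding r_def by (rule sum_nxt)
    moreover have "(\<Sum>i<m. ind (G (prv m i) j)) = r j" unfolding r_def by (rule sum_prv)
    ultimately show ?thesis unfolding r_def by simp
  qed
  define s where "s j = 5 * r j - int m" for j
  have srec: "s (prv n j) + 3 * s j + s (nxt n j) = 0" if "j < n" for j
    using rec[OF that] unfolding s_def by simp
  have pt: "4 * (s j)^2 \<le> (s (prv n j))^2 + (s (nxt n j))^2" if "j < n" for j
    using quad[OF srec[OF that]] .
  define S where "S = (\<Sum>j<n. (s j)^2)"
  have "4 * S \<le> (\<Sum>j<n. (s (prv n j))^2 + (s (nxt n j))^2)"
    unfolding S_def sum_distrib_left using pt by (intro sum_mono) simp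
  also have "\<dots> = 2 * S" unfolding S_def sum.distrib sum_prv[of "\<lambda>j. (s j)^2"] sum_nxt[of "\<lambda>j. (s j)^2"] by simp
  finally have "S \<le> 0" by simp
  moreover have "S \<ge> 0" unfolding S_def by (intro sum_nonneg) simp
  ultimately have "S = 0" by simp
  then have "\<forall>j\<in>{..<n}. (s j)^2 = 0" unfolding S_def by (subst sum_nonneg_eq_0_iff[symmetric]) auto
  then have "s 0 = 0" using n0 by auto
  then have "int m = 5 * r 0" unfolding s_def by simp
  then have "(5::int) dvd int m" by simp
  then show ?thesis by presburger
qed


lemma pigeon:
  assumes "distinct [x0, x1, x2, x3]" "x0 < k" "x1 < k" "x2 < k" "x3 < k" "y < k" "z < k"
    "y \<notin> {x0, x1, x2, x3}" "z \<notin> {x0, x1, x2, x3}" "k \<le> (5::nat)"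
  shows "y = z \<and> k = 5"
proof -
  have c5: "card {y, x0, x1, x2, x3} = 5" using assms(1,8) by simp
  have sub: "{y, x0, x1, x2, x3} \<subseteq> {..<k}" using assms by auto
  have "card {y, x0, x1, x2, x3} \<le> k" using card_mono[OF _ sub] by simp
  then have k5: "k = 5" using c5 assms(10) by simp
  have "y = z"
  proof (rule ccontr)
    assume "y \<noteq> z"
    then have "card {z, y, x0, x1, x2, x3} = 6" using assms(1,8,9) by simp
    moreover have "{z, y, x0, x1, x2, x3} \<subseteq> {..<k}" using assms by auto
    ultimately have "6 \<le> k" using card_mono[of "{..<k}" "{z, y, x0, x1, x2, x3}"] by simp
    then show False using assms(10) by simp
  qed
  then show ?thesis using k5 by simp
qed

lemma lower:
  assumes mn: "m \<ge> 3" "n \<ge> 3" and col: "incidence_coloring (torus_edges m n) k c" and k5: "k \<le> 5"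
  shows "k = 5 \<and> 5 dvd m \<and> 5 dvd n"
proof -
  have m0: "m > 0" "n > 0" using mn by auto
  define oc where "oc v d = c (v, {v, nb m n d v})" for v d
  have inc: "(v, {v, nb m n d v}) \<in> incidences (torus_edges m n)" if "inr m n v" "d < 4" for v d
    unfolding torus_inc[OF mn] using that by blast
  have C1: "\<And>a. a \<in> incidences (torus_edges m n) \<Longrightarrow> c a < k"
    using col unfolding incidence_coloring_def by blast
  have C2: "\<And>a b. a \<in> incidences (torus_edges m n) \<Longrightarrow> b \<in> incidences (torus_edges m n) \<Longrightarrow>
      a \<noteq> b \<Longrightarrow> inc_adj a b \<Longrightarrow> c a \<noteq> c b"
    using col unfolding incidence_coloring_def by blast
  have P1: "oc v d < k" if "inr m n v" "d < 4" for v d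
    unfolding oc_def using C1[OF inc[OF that]] .
  have P2: "oc v d \<noteq> oc v d'" if "inr m n v" "d < 4" "d' < 4" "d \<noteq> d'" for v d d'
  proof -
    have "{v, nb m n d v} \<noteq> {v, nb m n d' v}" using edge_eq_iff[OF mn that(1-3)] that(4) by simp
    then show ?thesis unfolding oc_def
      by (intro C2 inc that) (auto simp: inc_adj_def)
  qed
  have P3: "oc (nb m n d v) (opp d) \<noteq> oc v d'" if v: "inr m n v" and d: "d < 4" "d' < 4" for v d d'
  proof -
    define w where "w = nb m n d v"
    have w: "inr m n w" unfolding w_def using nb_inr m0 v by auto
    have wv: "nb m n (opp d) w = v" unfolding w_def using nb_opp v d by auto
    have ne: "w \<noteq> v" unfolding w_def using nb_ne mn v by auto
    have "c (w, {w, nb m n (opp d) w}) \<noteq> c (v, {v, nb m n d' v})"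
    proof (rule C2)
      show "(w, {w, nb m n (opp d) w}) \<in> incidences (torus_edges m n)" using inc w opp_lt d by auto
      show "(v, {v, nb m n d' v}) \<in> incidences (torus_edges m n)" using inc v d by auto
      show "(w, {w, nb m n (opp d) w}) \<noteq> (v, {v, nb m n d' v})" using ne by simp
      show "inc_adj (w, {w, nb m n (opp d) w}) (v, {v, nb m n d' v})" unfolding inc_adj_def wv by simp
    qed
    then show ?thesis unfolding oc_def w_def .
  qed
  define g where "g v = oc (nb m n 0 v) (opp 0)" for v
  have G1: "oc (nb m n d v) (opp d) = g v \<and> k = 5" if v: "inr m n v" and d: "d < 4" for v d
  proof -
    have "oc (nb m n d v) (opp d) = g v \<and> k = 5" unfolding g_def
    proof (rule pigeon[of "oc v 0" "oc v 1" "oc v 2" "oc v 3"])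
      show "distinct [oc v 0, oc v 1, oc v 2, oc v 3]" using P2[OF v] by simp
      show "oc v 0 < k" "oc v 1 < k" "oc v 2 < k" "oc v 3 < k" using P1[OF v] by auto
      have w1: "inr m n (nb m n d v)" using nb_inr m0 v by auto
      have w2: "inr m n (nb m n 0 v)" using nb_inr m0 v by auto
      show "oc (nb m n d v) (opp d) < k" using P1[OF w1 opp_lt[OF d]] .
      show "oc (nb m n 0 v) (opp 0) < k" using P1[OF w2] by (simp add: opp_def)
      show "oc (nb m n d v) (opp d) \<notin> {oc v 0, oc v 1, oc v 2, oc v 3}" using P3[OF v d] by auto
      show "oc (nb m n 0 v) (opp 0) \<notin> {oc v 0, oc v 1, oc v 2, oc v 3}" using P3[OF v, of 0] by auto
      show "k \<le> 5" by (rule k5)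
    qed
    then show ?thesis .
  qed
  have k5': "k = 5" using G1[of "(0,0)" 0] m0 by (simp add: inr_def)
  have G2: "oc v d = g (nb m n d v)" if v: "inr m n v" and d: "d < 4" for v d
  proof -
    define w where "w = nb m n d v"
    have w: "inr m n w" unfolding w_def using nb_inr m0 v by auto
    have wv: "nb m n (opp d) w = v" unfolding w_def using nb_opp v d by auto
    have "oc (nb m n (opp d) w) (opp (opp d)) = g w" using G1[OF w opp_lt[OF d]] by simp
    then have "oc v d = g w" using wv opp_opp[OF d] by simp
    then show ?thesis unfolding w_def .
  qed
  define G where "G i j = g (i, j)" for i j
  have Gprop: "distinct [G i j, G (nxt m i) j, G (prv m i) j, G i (nxt n j), G i (prv n j)] \<and>
       G i j < 5 \<and> G (nxt m i) j < 5 \<and> G (prv m i) j < 5 \<and> G i (nxt n j) < 5 \<and> G i (prv n j) < 5"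
    if ij: "i < m" "j < n" for i j
  proof -
    have v: "inr m n (i, j)" using ij by (simp add: inr_def)
    have e0: "G (nxt m i) j = oc (i,j) 0" using G2[OF v, of 0] by (simp add: G_def nb_def)
    have e1: "G (prv m i) j = oc (i,j) 1" using G2[OF v, of 1] by (simp add: G_def nb_def)
    have e2: "G i (nxt n j) = oc (i,j) 2" using G2[OF v, of 2] by (simp add: G_def nb_def)
    have e3: "G i (prv n j) = oc (i,j) 3" using G2[OF v, of 3] by (simp add: G_def nb_def)
    have e: "G i j = oc (nb m n 0 (i,j)) (opp 0)" by (simp add: G_def g_def)
    have d: "distinct [oc (i,j) 0, oc (i,j) 1, oc (i,j) 2, oc (i,j) 3]" using P2[OF v] by simp
    have n: "oc (nb m n 0 (i,j)) (opp 0) \<notin> {oc (i,j) 0, oc (i,j) 1, oc (i,j) 2, oc (i,j) 3}"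
      using P3[OF v, of 0] by auto
    have l: "oc (i,j) 0 < 5" "oc (i,j) 1 < 5" "oc (i,j) 2 < 5" "oc (i,j) 3 < 5" using P1[OF v] k5' by auto
    have l2: "oc (nb m n 0 (i,j)) (opp 0) < 5"
    proof -
      have "inr m n (nb m n 0 (i,j))" using nb_inr m0 v by auto
      from P1[OF this, of "opp 0"] show ?thesis using k5' by (simp add: opp_def)
    qed
    show ?thesis unfolding e0 e1 e2 e3 e using d n l l2 by simp
  qed
  have "5 dvd m" by (rule count5[OF m0(2) m0(1) Gprop])
  moreover have "5 dvd n"
  proof (rule count5[OF m0(1) m0(2), of "\<lambda>j i. G i j"])
    fix j i assume "j < n" "i < m"
    then show "distinct [G i j, G i (nxt n j), G i (prv n j), G (nxt m i) j, G (prv m i) j] \<and>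
      G i j < 5 \<and> G i (nxt n j) < 5 \<and> G i (prv n j) < 5 \<and> G (nxt m i) j < 5 \<and> G (prv m i) j < 5"
      using Gprop[of i j] by auto
  qed
  ultimately show ?thesis using k5' by simp
qed


theorem theorem1:
  fixes m n :: nat
  assumes "m \<ge> 3" and "n \<ge> 3"
  shows "incidence_chromatic_number (torus_edges m n) =
           (if 5 dvd m \<and> 5 dvd n then 5 else 6)"
proof (cases "5 dvd m \<and> 5 dvd n")
  case True
  have "(LEAST k. \<exists>c. incidence_coloring (torus_edges m n) k c) = 5"
  proof (rule Least_equality)
    show "\<exists>c. incidence_coloring (torus_edges m n) 5 c"
      using upper[OF assms cond5[OF assms True[THEN conjunct1] True[THEN conjunct2]]] by blast
  next
    fix k assume "\<exists>c. incidence_coloring (torus_edges m n) k c"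
    then obtain c where c: "incidence_coloring (torus_edges m n) k c" by blast
    show "5 \<le> k"
    proof (rule ccontr)
      assume "\<not> 5 \<le> k"
      then have "k \<le> 5" by simp
      from lower[OF assms c this] \<open>\<not> 5 \<le> k\<close> show False by simp
    qed
  qed
  then show ?thesis using True unfolding incidence_chromatic_number_def by simp
next
  case False
  have "(LEAST k. \<exists>c. incidence_coloring (torus_edges m n) k c) = 6"
  proof (rule Least_equality)
    show "\<exists>c. incidence_coloring (torus_edges m n) 6 c"
      using upper[OF assms cond6[OF assms]] by blast
  next
    fix k assume "\<exists>c. incidence_coloring (torus_edges m n) k c"
    then obtain c where c: "incidence_coloring (torus_edges m n) k c" by blast
    show "6 \<le> k"
    proof (rule ccontr)
      assume "\<not> 6 \<le> k"
      then have "k \<le> 5" by simp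
      from lower[OF assms c this] False show False by simp
    qed
  qed
  then show ?thesis using False unfolding incidence_chromatic_number_def by simp
qed

end
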